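(* Given two curves $\sigma=(v_1,\dots,v_{m'})$ and $\tau=(w_1,\dots,w_{m''})$ in $\mathbb{R}^d$ and a parameter $k\in\mathbb{N}$, for any $0<\varepsilon\le 1$ there exists a $(1+\varepsilon)$-approximation algorithm for $d_{k\text{-}DTW}(\sigma,\tau)$ (i.e., one that outputs a value $X$ with $d_{k\text{-}DTW}(\sigma,\tau)\le X\le(1+\varepsilon)\,d_{k\text{-}DTW}(\sigma,\tau)$) that runs in $O\!\left(m'm''\frac{\log(k/\varepsilon)}{\varepsilon}\right)$ time.
   Context: A traversal of $\sigma$ and $\tau$ is a sequence of index pairs starting with $(1,1)$, ending with $(m',m'')$, where each $(i,j)$ is followed only by $(i+1,j)$, $(i,j+1)$ or $(i+1,j+1)$. For a traversal $T$ let $s^{(T)}_1\ge s^{(T)}_2\ge\dots$ be the Euclidean distances $\|v_i-w_j\|$, $(i,j)\in T$, sorted non-increasingly, padded with zeros beyond $|T|$; $d_{k\text{-}DTW}(\sigma,\tau)=\min_T\sum_{l=1}^k s^{(T)}_l$. Running time counts distance computations and arithmetic operations as unit cost. *)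

theory Defs
  imports Complex_Main
begin

text \<open>A point of R^d is a real list of length d; a curve is a nonempty list of points.
  Curve vertices are indexed 1..m as in the paper (list position i-1).\<close>

definition eucl_dist :: "real list \<Rightarrow> real list \<Rightarrow> real" where
  "eucl_dist x y = sqrt (\<Sum>i<length x. (x ! i - y ! i)^2)"

definition is_traversal :: "nat \<Rightarrow> nat \<Rightarrow> (nat \<times> nat) list \<Rightarrow> bool" where
  "is_traversal m1 m2 T \<longleftrightarrow> T \<noteq> [] \<and> hd T = (1,1) \<and> last T = (m1, m2) \<and>
     (\<forall>l. Suc l < length T \<longrightarrow>
        (let (i,j) = T ! l in T ! Suc l \<in> {(i+1,j), (i,j+1), (i+1,j+1)}))"

definition topk_sum :: "nat \<Rightarrow> real list \<Rightarrow> real" where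
  "topk_sum k xs = (let s = rev (sort xs) in
     (\<Sum>l<k. if l < length s then s ! l else 0))"

definition trav_cost :: "nat \<Rightarrow> real list list \<Rightarrow> real list list \<Rightarrow> (nat \<times> nat) list \<Rightarrow> real" where
  "trav_cost k \<sigma> \<tau> T = topk_sum k (map (\<lambda>(i,j). eucl_dist (\<sigma> ! (i - 1)) (\<tau> ! (j - 1))) T)"

definition kdtw :: "nat \<Rightarrow> real list list \<Rightarrow> real list list \<Rightarrow> real" where
  "kdtw k \<sigma> \<tau> = Inf {trav_cost k \<sigma> \<tau> T | T. is_traversal (length \<sigma>) (length \<tau>) T}"

text \<open>The algorithm accesses the input only through distance queries
  dist(v_i, w_j) (1-based indices) and performs exact real arithmetic
  (+, -, *, /), constants and comparisons; every node costs one unit.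
  Computed values are kept in a store (list), addressed by position.\<close>

datatype aop = Add | Sub | Mul | Dvd

datatype ctree =
    Ret nat
  | Query nat nat ctree
  | Cnst real ctree
  | Op aop nat nat ctree
  | IfLe nat nat ctree ctree

fun apply_op :: "aop \<Rightarrow> real \<Rightarrow> real \<Rightarrow> real" where
  "apply_op Add x y = x + y"
| "apply_op Sub x y = x - y"
| "apply_op Mul x y = x * y"
| "apply_op Dvd x y = x / y"

definition lookup :: "real list \<Rightarrow> nat \<Rightarrow> real" where
  "lookup s a = (if a < length s then s ! a else 0)"

primrec run :: "(nat \<Rightarrow> nat \<Rightarrow> real) \<Rightarrow> real list \<Rightarrow> ctree \<Rightarrow> real \<times> nat" where
  "run D s (Ret a) = (lookup s a, 1)"
| "run D s (Query i j t) = (let (x, c) = run D (s @ [D i j]) t in (x, Suc c))"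
| "run D s (Cnst r t) = (let (x, c) = run D (s @ [r]) t in (x, Suc c))"
| "run D s (Op f a b t) =
     (let (x, c) = run D (s @ [apply_op f (lookup s a) (lookup s b)]) t in (x, Suc c))"
| "run D s (IfLe a b t1 t2) =
     (let (x, c) = (if lookup s a \<le> lookup s b then run D s t1 else run D s t2) in (x, Suc c))"

definition curve_oracle :: "real list list \<Rightarrow> real list list \<Rightarrow> nat \<Rightarrow> nat \<Rightarrow> real" where
  "curve_oracle \<sigma> \<tau> i j =
     (if 1 \<le> i \<and> i \<le> length \<sigma> \<and> 1 \<le> j \<and> j \<le> length \<tau>
      then eucl_dist (\<sigma> ! (i - 1)) (\<tau> ! (j - 1)) else 0)"

end

theory Submission
  imports Defs "HOL-Library.Multiset"
begin


lemma sum_list_perm_map: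
  assumes "mset xs = mset ys"
  shows "sum_list (map f xs) = sum_list (map (f::'a\<Rightarrow>real) ys)"
proof -
  have "mset (map f xs) = mset (map f ys)" using assms by simp
  then show ?thesis by (metis sum_mset_sum_list)
qed

lemma sum_list_map_nth: "sum_list (map f xs) = (\<Sum>l<length xs. f (xs ! l))"
  by (simp add: sum_list_sum_nth atLeast0LessThan)

lemma desc_nth:
  fixes xs :: "real list"
  defines "s \<equiv> rev (sort xs)"
  assumes "l \<le> l'" "l' < length s"
  shows "s ! l' \<le> s ! l"
proof -
  have L: "length s = length xs" by (simp add: s_def)
  have "sort xs ! (length xs - Suc l') \<le> sort xs ! (length xs - Suc l)"
    using assms L by (intro sorted_nth_mono) auto
  then show ?thesis using assms L by (simp add: s_def rev_nth)
qed

lemma sum_if_lt: "(\<Sum>l<(k::nat). if l < n then f l else (0::real)) = (\<Sum>l<min k n. f l)"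
  by (induct k) (auto simp: min_def)

lemma topk_upper:
  fixes xs :: "real list" and z :: real
  assumes z: "0 \<le> z"
  shows "topk_sum k xs \<le> real k * z + sum_list (map (\<lambda>x. max (x - z) 0) xs)"
proof -
  define s where "s = rev (sort xs)"
  have ms: "mset s = mset xs" by (simp add: s_def)
  have L: "length s = length xs" by (simp add: s_def)
  define f where "f l = (if l < length s then max (s ! l - z) 0 else 0)" for l
  have "topk_sum k xs = (\<Sum>l<k. if l < length s then s ! l else 0)"
    unfolding topk_sum_def s_def Let_def by simp
  also have "\<dots> \<le> (\<Sum>l<k. z + f l)"
    by (rule sum_mono) (auto simp: f_def z)
  also have "\<dots> = real k * z + (\<Sum>l<k. f l)" by (simp add: sum.distrib)
  also have "(\<Sum>l<k. f l) = (\<Sum>l<min k (length s). max (s ! l - z) 0)"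
    unfolding f_def by (rule sum_if_lt)
  also have "\<dots> \<le> (\<Sum>l<length s. max (s ! l - z) 0)"
    by (rule sum_mono2) auto
  also have "\<dots> = sum_list (map (\<lambda>x. max (x - z) 0) s)"
    by (simp add: sum_list_map_nth)
  also have "\<dots> = sum_list (map (\<lambda>x. max (x - z) 0) xs)"
    by (rule sum_list_perm_map[OF ms])
  finally show ?thesis by simp
qed

lemma topk_nonneg:
  fixes xs :: "real list"
  assumes "\<forall>x\<in>set xs. 0 \<le> x"
  shows "0 \<le> topk_sum k xs"
  unfolding topk_sum_def Let_def
proof (intro sum_nonneg)
  fix l assume "l \<in> {..<k}"
  show "0 \<le> (if l < length (rev (sort xs)) then rev (sort xs) ! l else 0)"
  proof (cases "l < length (rev (sort xs))")
    case True
    then have "rev (sort xs) ! l \<in> set (rev (sort xs))" by (rule nth_mem)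
    then show ?thesis using assms True by simp
  qed simp
qed

lemma topk_ge_elem:
  fixes xs :: "real list"
  assumes nn: "\<forall>x\<in>set xs. 0 \<le> x" and k: "1 \<le> k" and x: "x \<in> set xs"
  shows "x \<le> topk_sum k xs"
proof -
  define s where "s = rev (sort xs)"
  have L: "length s = length xs" by (simp add: s_def)
  have ss: "set s = set xs" by (simp add: s_def)
  obtain l where l: "l < length s" "s ! l = x" using x ss by (metis in_set_conv_nth)
  have "x \<le> s ! 0" using desc_nth[of 0 l xs] l by (simp add: s_def)
  also have "s ! 0 = (if (0::nat) < length s then s ! 0 else 0)" using l by (cases s) auto
  also have "\<dots> \<le> (\<Sum>l<k. if l < length s then s ! l else 0)"
  proof (rule member_le_sum[where f="\<lambda>l. if l < length s then s ! l else 0"])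
    show "0 \<in> {..<k}" using k by simp
  next
    fix j assume "j \<in> {..<k} - {0}"
    show "0 \<le> (if j < length s then s ! j else 0)"
      using nn ss by (auto simp: nth_mem)
  qed simp
  also have "\<dots> = topk_sum k xs" unfolding topk_sum_def s_def Let_def by simp
  finally show ?thesis .
qed

lemma topk_lower:
  fixes xs :: "real list"
  assumes nn: "\<forall>x\<in>set xs. 0 \<le> x" and k: "1 \<le> k"
  shows "\<exists>z0. 0 \<le> z0 \<and> real k * z0 \<le> topk_sum k xs \<and>
           real k * z0 + sum_list (map (\<lambda>x. max (x - z0) 0) xs) \<le> topk_sum k xs"
proof -
  define s where "s = rev (sort xs)"
  have ms: "mset s = mset xs" by (simp add: s_def)
  have L: "length s = length xs" by (simp add: s_def)
  have ss: "set s = set xs" by (simp add: s_def)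
  have T: "topk_sum k xs = (\<Sum>l<k. if l < length s then s ! l else 0)"
    unfolding topk_sum_def s_def Let_def by simp
  have snn: "\<And>l. l < length s \<Longrightarrow> 0 \<le> s ! l" using nn ss by (auto simp: nth_mem)
  show ?thesis
  proof (cases "length s \<le> k")
    case True
    have "topk_sum k xs = (\<Sum>l<length s. s ! l)"
      unfolding T sum_if_lt using True by (simp add: min_def)
    also have "\<dots> = sum_list (map (\<lambda>x. x) s)" using sum_list_map_nth[of "\<lambda>x. x" s] by simp
    also have "\<dots> = sum_list (map (\<lambda>x. x) xs)" by (rule sum_list_perm_map[OF ms])
    also have "\<dots> = sum_list (map (\<lambda>x. max (x - 0) 0) xs)"
      using nn by (intro arg_cong[where f=sum_list] map_cong) auto
    finally have E: "topk_sum k xs = sum_list (map (\<lambda>x. max (x - 0) 0) xs)" .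
    show ?thesis
      by (rule exI[of _ 0]) (use E topk_nonneg[OF nn, of k] in simp)
  next
    case False
    define z0 where "z0 = s ! (k - 1)"
    have z0: "0 \<le> z0" unfolding z0_def using False k by (intro snn) auto
    have ge: "\<And>l. l < k \<Longrightarrow> z0 \<le> s ! l"
      unfolding z0_def s_def using False k by (intro desc_nth) (auto simp: s_def)
    have le: "\<And>l. k \<le> l \<Longrightarrow> l < length s \<Longrightarrow> s ! l \<le> z0"
      unfolding z0_def s_def using False k by (intro desc_nth) (auto simp: s_def)
    have T2: "topk_sum k xs = (\<Sum>l<k. s ! l)" unfolding T using False
      by (intro sum.cong) auto
    have "sum_list (map (\<lambda>x. max (x - z0) 0) xs) = sum_list (map (\<lambda>x. max (x - z0) 0) s)"
      by (rule sum_list_perm_map[OF ms, symmetric])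
    also have "\<dots> = (\<Sum>l<length s. max (s ! l - z0) 0)" by (simp add: sum_list_map_nth)
    also have "\<dots> = (\<Sum>l<k. max (s ! l - z0) 0) + (\<Sum>l\<in>{k..<length s}. max (s ! l - z0) 0)"
    proof -
      have "{..<length s} = {..<k} \<union> {k..<length s}" using False by auto
      then show ?thesis by (simp add: sum.union_disjoint[of "{..<k}" "{k..<length s}"] ivl_disj_int)
    qed
    also have "(\<Sum>l\<in>{k..<length s}. max (s ! l - z0) 0) = 0"
      using le by (intro sum.neutral) auto
    also have "(\<Sum>l<k. max (s ! l - z0) 0) = (\<Sum>l<k. s ! l - z0)"
      using ge by (intro sum.cong) auto
    also have "\<dots> = (\<Sum>l<k. s ! l) - real k * z0" by (simp add: sum_subtractf)
    finally have E: "sum_list (map (\<lambda>x. max (x - z0) 0) xs) = topk_sum k xs - real k * z0"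
      using T2 by simp
    have "real k * z0 = (\<Sum>l<k. z0)" by simp
    also have "\<dots> \<le> (\<Sum>l<k. s ! l)" by (rule sum_mono) (use ge in auto)
    finally have "real k * z0 \<le> topk_sum k xs" using T2 by simp
    then show ?thesis using E z0 by (intro exI[of _ z0]) simp
  qed
qed



definition stp :: "nat \<times> nat \<Rightarrow> nat \<times> nat \<Rightarrow> bool" where
  "stp p q \<longleftrightarrow> q \<in> {(fst p + 1, snd p), (fst p, snd p + 1), (fst p + 1, snd p + 1)}"

definition vp :: "(nat \<times> nat) list \<Rightarrow> bool" where
  "vp T \<longleftrightarrow> T \<noteq> [] \<and> hd T = (1,1) \<and> (\<forall>l. Suc l < length T \<longrightarrow> stp (T ! l) (T ! Suc l))"

lemma stp_let: "(let (i,j) = x in y \<in> {(i+1,j), (i,j+1), (i+1,j+1)}) \<longleftrightarrow> stp x y"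
  by (cases x) (simp add: stp_def)

lemma is_traversal_vp: "is_traversal m1 m2 T \<longleftrightarrow> vp T \<and> last T = (m1, m2)"
  unfolding is_traversal_def vp_def stp_let by auto

lemma vp_single[simp]: "vp [p] \<longleftrightarrow> p = (1,1)"
  by (auto simp: vp_def)

lemma vp_snoc: "T \<noteq> [] \<Longrightarrow> vp (T @ [p]) \<longleftrightarrow> vp T \<and> stp (last T) p"
proof -
  assume ne: "T \<noteq> []"
  have hd: "hd (T @ [p]) = hd T" using ne by simp
  have A: "(\<forall>l. Suc l < length (T @ [p]) \<longrightarrow> stp ((T @ [p]) ! l) ((T @ [p]) ! Suc l)) \<longleftrightarrow>
        (\<forall>l. Suc l < length T \<longrightarrow> stp (T ! l) (T ! Suc l)) \<and> stp (last T) p"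
  proof
    assume H: "\<forall>l. Suc l < length (T @ [p]) \<longrightarrow> stp ((T @ [p]) ! l) ((T @ [p]) ! Suc l)"
    have 1: "\<forall>l. Suc l < length T \<longrightarrow> stp (T ! l) (T ! Suc l)"
    proof (intro allI impI)
      fix l assume "Suc l < length T"
      then show "stp (T ! l) (T ! Suc l)" using H[rule_format, of l] by (simp add: nth_append)
    qed
    have "stp ((T @ [p]) ! (length T - 1)) ((T @ [p]) ! Suc (length T - 1))"
      using H ne by (intro H[rule_format]) simp
    then have "stp (last T) p" using ne by (simp add: nth_append last_conv_nth)
    then show "(\<forall>l. Suc l < length T \<longrightarrow> stp (T ! l) (T ! Suc l)) \<and> stp (last T) p" using 1 by simp
  next
    assume H: "(\<forall>l. Suc l < length T \<longrightarrow> stp (T ! l) (T ! Suc l)) \<and> stp (last T) p"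
    show "\<forall>l. Suc l < length (T @ [p]) \<longrightarrow> stp ((T @ [p]) ! l) ((T @ [p]) ! Suc l)"
    proof (intro allI impI)
      fix l assume l: "Suc l < length (T @ [p])"
      show "stp ((T @ [p]) ! l) ((T @ [p]) ! Suc l)"
      proof (cases "Suc l < length T")
        case True then show ?thesis using H by (simp add: nth_append)
      next
        case False
        then have L: "l = length T - 1" using l by simp
        then show ?thesis using H ne by (simp add: nth_append last_conv_nth)
      qed
    qed
  qed
  show ?thesis unfolding vp_def using ne A hd by simp
qed

lemma vp_range:
  "vp T \<Longrightarrow> last T = (a, b) \<Longrightarrow> \<forall>p\<in>set T. 1 \<le> fst p \<and> fst p \<le> a \<and> 1 \<le> snd p \<and> snd p \<le> b"
proof (induction T arbitrary: a b rule: rev_induct)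
  case Nil then show ?case by (simp add: vp_def)
next
  case (snoc p T)
  show ?case
  proof (cases "T = []")
    case True then show ?thesis using snoc by auto
  next
    case False
    obtain a' b' where l: "last T = (a', b')" by fastforce
    have v: "vp T" "stp (last T) p" using snoc.prems vp_snoc[OF False] by auto
    have p: "p = (a, b)" using snoc.prems by simp
    have IH: "\<forall>p\<in>set T. 1 \<le> fst p \<and> fst p \<le> a' \<and> 1 \<le> snd p \<and> snd p \<le> b'"
      using snoc.IH[OF v(1) l] .
    have "a' \<le> a" "b' \<le> b" using v(2) l p by (auto simp: stp_def)
    moreover have "1 \<le> a'" "1 \<le> b'" using IH l False last_in_set by fastforce+
    ultimately show ?thesis using IH p by force
  qed
qed

fun hf :: "bool \<Rightarrow> real \<Rightarrow> real \<Rightarrow> real" where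
  "hf True x y = x + y"
| "hf False x y = max x y"

lemma hf_mono: "y \<le> y' \<Longrightarrow> hf b x y \<le> hf b x y'"
  by (cases b) auto

fun W :: "bool \<Rightarrow> (nat \<Rightarrow> nat \<Rightarrow> real) \<Rightarrow> nat \<Rightarrow> nat \<Rightarrow> real" where
  "W b G 0 0 = hf b (G 1 1) 0"
| "W b G 0 (Suc j) = hf b (G 1 (j+2)) (W b G 0 j)"
| "W b G (Suc i) 0 = hf b (G (i+2) 1) (W b G i 0)"
| "W b G (Suc i) (Suc j) = hf b (G (i+2) (j+2))
     (min (min (W b G i (Suc j)) (W b G (Suc i) j)) (W b G i j))"

definition pv :: "bool \<Rightarrow> (nat \<Rightarrow> nat \<Rightarrow> real) \<Rightarrow> (nat \<times> nat) list \<Rightarrow> real" where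
  "pv b G T = foldl (\<lambda>acc p. hf b (G (fst p) (snd p)) acc) 0 T"

lemma pv_snoc[simp]: "pv b G (T @ [p]) = hf b (G (fst p) (snd p)) (pv b G T)"
  by (simp add: pv_def)

lemma pv_Nil[simp]: "pv b G [] = 0" by (simp add: pv_def)

lemma pv_single[simp]: "pv b G [p] = hf b (G (fst p) (snd p)) 0" by (simp add: pv_def)

lemma pv_sum: "pv True G T = sum_list (map (\<lambda>p. G (fst p) (snd p)) T)"
  by (induction T rule: rev_induct) auto

lemma pv_max_ge: "p \<in> set T \<Longrightarrow> G (fst p) (snd p) \<le> pv False G T"
  by (induction T rule: rev_induct) auto

lemma pv_max_nonneg: "0 \<le> pv False G T"
  by (induction T rule: rev_induct) auto

lemma pv_max_le: "0 \<le> B \<Longrightarrow> (\<forall>p\<in>set T. G (fst p) (snd p) \<le> B) \<Longrightarrow> pv False G T \<le> B"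
  by (induction T rule: rev_induct) auto

lemma W_lower:
  "vp T \<Longrightarrow> last T = (Suc i, Suc j) \<Longrightarrow> W b G i j \<le> pv b G T"
proof (induction T arbitrary: i j rule: rev_induct)
  case Nil then show ?case by (simp add: vp_def)
next
  case (snoc p T)
  have p: "p = (Suc i, Suc j)" using snoc.prems by simp
  show ?case
  proof (cases "T = []")
    case True then show ?thesis using snoc p by auto
  next
    case False
    have v: "vp T" "stp (last T) p" using snoc.prems vp_snoc[OF False] by auto
    obtain a b' where l: "last T = (a, b')" by fastforce
    have "1 \<le> a" "1 \<le> b'" using vp_range[OF v(1) l] False last_in_set l by fastforce+
    then obtain a0 b0 where ab: "a = Suc a0" "b' = Suc b0" by (metis One_nat_def Suc_le_D)
    have IH: "W b G a0 b0 \<le> pv b G T" using snoc.IH[OF v(1)] l ab by simp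
    have key: "W b G i j \<le> hf b (G (Suc i) (Suc j)) (W b G a0 b0)"
    proof -
      consider "i = Suc a0" "j = b0" | "i = a0" "j = Suc b0" | "i = Suc a0" "j = Suc b0"
        using v(2) l ab p by (auto simp: stp_def)
      then show ?thesis
      proof cases
        case 1 then show ?thesis
          by (cases b0) (auto intro!: hf_mono simp: numeral_2_eq_2)
      next
        case 2 then show ?thesis
          by (cases a0) (auto intro!: hf_mono simp: numeral_2_eq_2)
      next
        case 3 then show ?thesis
          by (auto intro!: hf_mono simp: numeral_2_eq_2)
      qed
    qed
    show ?thesis using order_trans[OF key hf_mono[OF IH]] p by simp
  qed
qed

lemma W_upper:
  "\<exists>T. vp T \<and> last T = (Suc i, Suc j) \<and> pv b G T = W b G i j"
proof (induction b G i j rule: W.induct)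
  case (1 b G)
  then show ?case by (intro exI[of _ "[(1,1)]"]) auto
next
  case (2 b G j)
  then obtain T where T: "vp T" "last T = (1, Suc j)" "pv b G T = W b G 0 j" by auto
  have "T \<noteq> []" using T by (auto simp: vp_def)
  then show ?case using T
    by (intro exI[of _ "T @ [(1, Suc (Suc j))]"]) (auto simp: vp_snoc stp_def numeral_2_eq_2)
next
  case (3 b G i)
  then obtain T where T: "vp T" "last T = (Suc i, 1)" "pv b G T = W b G i 0" by auto
  have "T \<noteq> []" using T by (auto simp: vp_def)
  then show ?case using T
    by (intro exI[of _ "T @ [(Suc (Suc i), 1)]"]) (auto simp: vp_snoc stp_def numeral_2_eq_2)
next
  case (4 b G i j)
  define m where "m = min (min (W b G i (Suc j)) (W b G (Suc i) j)) (W b G i j)"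
  have "\<exists>T. vp T \<and> stp (last T) (Suc (Suc i), Suc (Suc j)) \<and> pv b G T = m"
  proof -
    consider "m = W b G i (Suc j)" | "m = W b G (Suc i) j" | "m = W b G i j"
      unfolding m_def by linarith
    then show ?thesis
    proof cases
      case 1 then show ?thesis using "4.IH"(1) by (force simp: stp_def)
    next
      case 2 then show ?thesis using "4.IH"(2) by (force simp: stp_def)
    next
      case 3 then show ?thesis using "4.IH"(3) by (force simp: stp_def)
    qed
  qed
  then obtain T where T: "vp T" "stp (last T) (Suc (Suc i), Suc (Suc j))" "pv b G T = m" by blast
  have "T \<noteq> []" using T by (auto simp: vp_def)
  then show ?case using T
    by (intro exI[of _ "T @ [(Suc (Suc i), Suc (Suc j))]"]) (auto simp: vp_snoc m_def numeral_2_eq_2)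
qed



datatype instr = IQ nat nat | IC real | IO aop nat nat | IMin nat nat | IMax nat nat

fun ivals :: "(nat \<Rightarrow> nat \<Rightarrow> real) \<Rightarrow> real list \<Rightarrow> instr \<Rightarrow> real list" where
  "ivals D s (IQ i j) = [D i j]"
| "ivals D s (IC r) = [r]"
| "ivals D s (IO f a b) = [apply_op f (lookup s a) (lookup s b)]"
| "ivals D s (IMin a b) = (let u = lookup s a + lookup s b; s1 = s @ [u] in
     if lookup s a \<le> lookup s b then [u, lookup s1 (length s) - lookup s1 b]
     else [u, lookup s1 (length s) - lookup s1 a])"
| "ivals D s (IMax a b) = (let u = lookup s a + lookup s b; s1 = s @ [u] in
     if lookup s a \<le> lookup s b then [u, lookup s1 (length s) - lookup s1 a]
     else [u, lookup s1 (length s) - lookup s1 b])"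

fun exec :: "(nat \<Rightarrow> nat \<Rightarrow> real) \<Rightarrow> real list \<Rightarrow> instr list \<Rightarrow> real list" where
  "exec D s [] = s"
| "exec D s (x # xs) = exec D (s @ ivals D s x) xs"

fun icost :: "instr \<Rightarrow> nat" where
  "icost (IMin a b) = 3"
| "icost (IMax a b) = 3"
| "icost _ = 1"

fun ient :: "instr \<Rightarrow> nat" where
  "ient (IMin a b) = 2"
| "ient (IMax a b) = 2"
| "ient _ = 1"

fun cprog :: "nat \<Rightarrow> instr list \<Rightarrow> nat \<Rightarrow> ctree" where
  "cprog n [] r = Ret r"
| "cprog n (IQ i j # xs) r = Query i j (cprog (Suc n) xs r)"
| "cprog n (IC c # xs) r = Cnst c (cprog (Suc n) xs r)"
| "cprog n (IO f a b # xs) r = Op f a b (cprog (Suc n) xs r)"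
| "cprog n (IMin a b # xs) r = IfLe a b (Op Add a b (Op Sub n b (cprog (n+2) xs r)))
                                       (Op Add a b (Op Sub n a (cprog (n+2) xs r)))"
| "cprog n (IMax a b # xs) r = IfLe a b (Op Add a b (Op Sub n a (cprog (n+2) xs r)))
                                       (Op Add a b (Op Sub n b (cprog (n+2) xs r)))"

lemma lookup_app: "a < length s \<Longrightarrow> lookup (s @ xs) a = lookup s a"
  by (simp add: lookup_def nth_append)

lemma lookup_len: "lookup (s @ x # xs) (length s) = x"
  by (simp add: lookup_def nth_append)

lemma run_comp:
  "length s = n \<Longrightarrow> run D s (cprog n xs r) = (lookup (exec D s xs) r, Suc (sum_list (map icost xs)))"
proof (induction xs arbitrary: s n)
  case Nil then show ?case by simp
next
  case (Cons x xs)
  have IH: "\<And>s'. length s' = Suc (Suc n) \<Longrightarrow> run D s' (cprog (Suc (Suc n)) xs r) =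
      (lookup (exec D s' xs) r, Suc (sum_list (map icost xs)))" using Cons.IH by metis
  have IH1: "\<And>s'. length s' = Suc n \<Longrightarrow> run D s' (cprog (Suc n) xs r) =
      (lookup (exec D s' xs) r, Suc (sum_list (map icost xs)))" using Cons.IH by metis
  show ?case
  proof (cases x)
    case (IMin a b)
    then show ?thesis using Cons.prems
      by (auto simp: IH Let_def case_prod_beta)
  next
    case (IMax a b)
    then show ?thesis using Cons.prems
      by (auto simp: IH Let_def case_prod_beta)
  qed (use Cons.prems in \<open>auto simp: IH1\<close>)
qed

lemma exec_append[simp]: "exec D s (xs @ ys) = exec D (exec D s xs) ys"
  by (induction xs arbitrary: s) auto

lemma length_ivals: "length (ivals D s x) = ient x"
  by (cases x) (auto simp: Let_def)

lemma exec_length: "length (exec D s xs) = length s + sum_list (map ient xs)"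
  by (induction xs arbitrary: s) (auto simp: length_ivals)

lemma exec_prefix: "\<exists>ys. exec D s xs = s @ ys"
  by (induction xs arbitrary: s) (auto, metis append.assoc)

lemma exec_lookup: "a < length s \<Longrightarrow> lookup (exec D s xs) a = lookup s a"
  using exec_prefix[of D s xs] lookup_app by auto

lemma icost_le: "sum_list (map icost xs) \<le> 3 * sum_list (map ient xs)"
proof (induction xs)
  case (Cons x xs) then show ?case by (cases x) auto
qed simp

lemma ivals_min: "a < length s \<Longrightarrow> b < length s \<Longrightarrow>
   ivals D s (IMin a b) = [lookup s a + lookup s b, min (lookup s a) (lookup s b)]"
  by (auto simp: Let_def lookup_app lookup_len[where xs="[]", simplified])

lemma ivals_max: "a < length s \<Longrightarrow> b < length s \<Longrightarrow>
   ivals D s (IMax a b) = [lookup s a + lookup s b, max (lookup s a) (lookup s b)]"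
  by (auto simp: Let_def lookup_app lookup_len[where xs="[]", simplified])



definition cellg :: "nat \<Rightarrow> nat \<Rightarrow> bool \<Rightarrow> nat \<Rightarrow> nat \<Rightarrow> nat \<Rightarrow> nat \<Rightarrow> nat \<Rightarrow> instr list" where
  "cellg n za hk i j a1 a2 a3 = [IQ (i+1) (j+1), IO Sub n za, IMax (n+1) 0, IMin a1 a2, IMin (n+5) a3] @
     (if hk then [IO Add (n+3) (n+7), IO Add (n+8) 0] else [IMax (n+3) (n+7)])"

definition Gf :: "(nat \<Rightarrow> nat \<Rightarrow> real) \<Rightarrow> real \<Rightarrow> nat \<Rightarrow> nat \<Rightarrow> real" where
  "Gf D z i j = max (D i j - z) 0"

lemma lookup_app2: "lookup (s @ xs) a = (if a < length s then lookup s a else lookup xs (a - length s))"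
  by (auto simp: lookup_def nth_append)

lemma lookup_Cons: "lookup (x # xs) a = (if a = 0 then x else lookup xs (a - 1))"
  by (cases a) (auto simp: lookup_def)

lemma cellg_exec:
  assumes L: "length E = n" and a: "a1 < n" "a2 < n" "a3 < n" "za < n" "0 < n" and z: "lookup E 0 = 0"
  shows "length (exec D E (cellg n za hk i j a1 a2 a3)) = n + 10 \<and>
         lookup (exec D E (cellg n za hk i j a1 a2 a3)) (n + 9) =
           hf hk (Gf D (lookup E za) (i+1) (j+1)) (min (min (lookup E a1) (lookup E a2)) (lookup E a3))"
proof -
  define d where "d = D (i+1) (j+1)"
  define z0 where "z0 = lookup E za"
  define g where "g = max (d - z0) 0"
  define m1 where "m1 = min (lookup E a1) (lookup E a2)"
  define m where "m = min m1 (lookup E a3)"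
  define E5 where "E5 = E @ [d, d - z0, d - z0 + 0, g, lookup E a1 + lookup E a2, m1, m1 + lookup E a3, m]"
  have e5: "exec D E [IQ (i+1) (j+1), IO Sub n za, IMax (n+1) 0, IMin a1 a2, IMin (n+5) a3] = E5"
    using L a z
    by (simp del: ivals.simps(4,5) add: ivals_min ivals_max lookup_app lookup_app2 lookup_Cons E5_def d_def z0_def g_def m1_def m_def)
  have L5: "length E5 = n + 8" using L by (simp add: E5_def)
  have l3: "lookup E5 (n+3) = g" using L by (simp add: E5_def lookup_app2 lookup_Cons)
  have l7: "lookup E5 (n+7) = m" using L by (simp add: E5_def lookup_app2 lookup_Cons)
  have l0: "lookup E5 0 = 0" using L a z by (simp add: E5_def lookup_app2)
  show ?thesis
  proof (cases hk)
    case True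
    have "exec D E (cellg n za hk i j a1 a2 a3) = E5 @ [g + m, g + m + 0]"
      using True e5 L5 l3 l7 l0 by (simp add: cellg_def lookup_app2 lookup_Cons)
    then show ?thesis using L5 L
      by (simp add: True lookup_app2 lookup_Cons Gf_def g_def d_def z0_def m_def m1_def)
  next
    case False
    have "exec D E (cellg n za hk i j a1 a2 a3) = E5 @ [g + m, max g m]"
      using False e5 L5 l3 l7 l0 by (simp del: ivals.simps(4,5) add: cellg_def ivals_max)
    then show ?thesis using L5 L
      by (simp add: False lookup_app2 lookup_Cons Gf_def g_def d_def z0_def m_def m1_def)
  qed
qed



definition cA :: "nat \<Rightarrow> nat \<Rightarrow> nat \<Rightarrow> nat \<Rightarrow> nat" where
  "cA m2 base i j = base + 10 * (i * m2 + j) + 9"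

definition preds :: "nat \<Rightarrow> nat \<Rightarrow> nat \<Rightarrow> nat \<Rightarrow> nat \<times> nat \<times> nat" where
  "preds m2 base i j = (if i = 0 \<and> j = 0 then (0, 0, 0)
                         else if i = 0 then (cA m2 base 0 (j-1), cA m2 base 0 (j-1), cA m2 base 0 (j-1))
                         else if j = 0 then (cA m2 base (i-1) 0, cA m2 base (i-1) 0, cA m2 base (i-1) 0)
                         else (cA m2 base (i-1) j, cA m2 base i (j-1), cA m2 base (i-1) (j-1)))"

definition cell :: "nat \<Rightarrow> nat \<Rightarrow> nat \<Rightarrow> bool \<Rightarrow> nat \<Rightarrow> nat \<Rightarrow> instr list" where
  "cell m2 base za hk i j =
    (case preds m2 base i j of (a1, a2, a3) \<Rightarrow> cellg (base + 10 * (i * m2 + j)) za hk i j a1 a2 a3)"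

definition phase :: "nat \<Rightarrow> nat \<Rightarrow> nat \<Rightarrow> bool \<Rightarrow> nat \<Rightarrow> instr list" where
  "phase m2 base za hk t = concat (map (\<lambda>t. cell m2 base za hk (t div m2) (t mod m2)) [0..<t])"

lemma phase_correct:
  assumes L: "length s = base" and b: "0 < base" "za < base" and z: "lookup s 0 = 0" and m2: "0 < m2"
  shows "length (exec D s (phase m2 base za hk t)) = base + 10 * t \<and>
    (\<forall>i j. j < m2 \<longrightarrow> i * m2 + j < t \<longrightarrow>
       lookup (exec D s (phase m2 base za hk t)) (base + 10 * (i * m2 + j) + 9) =
       W hk (Gf D (lookup s za)) i j)"
proof (induction t)
  case 0 then show ?case using L by (simp add: phase_def)
next
  case (Suc t)
  define E where "E = exec D s (phase m2 base za hk t)"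
  have LE: "length E = base + 10 * t" using Suc E_def by simp
  have IH: "\<And>i j. j < m2 \<Longrightarrow> i * m2 + j < t \<Longrightarrow>
       lookup E (base + 10 * (i * m2 + j) + 9) = W hk (Gf D (lookup s za)) i j"
    using Suc E_def by simp
  have E0: "lookup E 0 = 0" using exec_lookup[of 0 s] b z L E_def by simp
  have Eza: "lookup E za = lookup s za" using exec_lookup[of za s] b L E_def by simp
  define i0 where "i0 = t div m2"
  define j0 where "j0 = t mod m2"
  have t: "t = i0 * m2 + j0" and j0: "j0 < m2" using m2 by (simp_all add: i0_def j0_def)
  have ph: "phase m2 base za hk (Suc t) = phase m2 base za hk t @ cell m2 base za hk i0 j0"
    by (simp add: phase_def i0_def j0_def)
  define A where "A = cA m2 base"
  define G where "G = Gf D (lookup s za)"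
  obtain a1 a2 a3 where aa0: "preds m2 base i0 j0 = (a1, a2, a3)"
    by (metis prod_cases3)
  have cl: "cell m2 base za hk i0 j0 = cellg (base + 10 * t) za hk i0 j0 a1 a2 a3"
    unfolding cell_def using aa0 t by simp
  have aa: "(a1, a2, a3) = (if i0 = 0 \<and> j0 = 0 then (0, 0, 0)
                         else if i0 = 0 then (A 0 (j0-1), A 0 (j0-1), A 0 (j0-1))
                         else if j0 = 0 then (A (i0-1) 0, A (i0-1) 0, A (i0-1) 0)
                         else (A (i0-1) j0, A i0 (j0-1), A (i0-1) (j0-1)))"
    using aa0 unfolding preds_def A_def by simp
  have bnd: "a1 < base + 10 * t \<and> a2 < base + 10 * t \<and> a3 < base + 10 * t"
  proof -
    have "A i j < base + 10 * t" if "i * m2 + j < t" for i j using that by (simp add: A_def cA_def)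
    moreover have "(i0 - 1) * m2 + j < t" if "0 < i0" "j < m2" for j
    proof -
      have "(i0 - 1) * m2 + m2 = i0 * m2" using that by (metis Suc_diff_1 mult_Suc add.commute)
      then show ?thesis using that t by linarith
    qed
    ultimately have f: "A i j < base + 10 * t" if "i * m2 + j < t" for i j using that by blast
    have P: "(i0 - 1) * m2 + m2 = i0 * m2" if "0 < i0" using that by (metis Suc_diff_1 mult_Suc add.commute)
    have g1: "A (i0-1) j0 < base + 10 * t" if "0 < i0" using P[OF that] t j0 by (intro f) linarith
    have g2: "A i0 (j0-1) < base + 10 * t" if "0 < j0" using that t by (intro f) linarith
    have g3: "A (i0-1) (j0-1) < base + 10 * t" if "0 < i0" "0 < j0" using P[OF that(1)] that t j0 by (intro f) linarith
    have g4: "A (i0-1) 0 < base + 10 * t" if "0 < i0" using P[OF that] t j0 m2 by (intro f) linarith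
    have g5: "A 0 (j0-1) < base + 10 * t" if "0 < j0" "i0 = 0" using that t by (intro f) linarith
    show ?thesis using aa b t j0 g1 g2 g3 g4 g5 by (auto split: if_splits)
  qed
  have val: "min (min (lookup E a1) (lookup E a2)) (lookup E a3) = 0 \<and> i0 = 0 \<and> j0 = 0 \<or>
     (W hk G i0 j0 = hf hk (G (i0+1) (j0+1)) (min (min (lookup E a1) (lookup E a2)) (lookup E a3)))"
  proof -
    have Pm: "(i0 - 1) * m2 + m2 = i0 * m2" if "0 < i0" using that by (metis Suc_diff_1 mult_Suc add.commute)
    consider (a) "i0 = 0" "j0 = 0" | (b) "i0 = 0" "j0 > 0" | (c) "i0 > 0" "j0 = 0" | (d) "i0 > 0" "j0 > 0" by blast
    then show ?thesis
    proof cases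
      case a then show ?thesis using aa E0 by simp
    next
      case b
      then obtain j' where j': "j0 = Suc j'" by (metis gr0_implies_Suc)
      have "lookup E (A 0 j') = W hk G 0 j'" using IH[of j' 0] j0 t j' b by (simp add: A_def cA_def G_def)
      then show ?thesis using aa b j' by (simp add: numeral_2_eq_2)
    next
      case c
      then obtain i' where i': "i0 = Suc i'" by (metis gr0_implies_Suc)
      have "i' * m2 + 0 < t" using Pm c t i' m2 by simp
      then have "lookup E (A i' 0) = W hk G i' 0" using IH[of 0 i'] m2 by (simp add: A_def cA_def G_def)
      then show ?thesis using aa c i' by (simp add: numeral_2_eq_2)
    next
      case d
      then obtain i' j' where i': "i0 = Suc i'" and j': "j0 = Suc j'" by (metis gr0_implies_Suc)
      have "i' * m2 + j0 < t" using Pm d t i' j0 by simp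
      then have 1: "lookup E (A i' j0) = W hk G i' j0" using IH[of j0 i'] j0 by (simp add: A_def cA_def G_def)
      have "i0 * m2 + j' < t" using t j' by simp
      then have 2: "lookup E (A i0 j') = W hk G i0 j'" using IH[of j' i0] j0 j' by (simp add: A_def cA_def G_def)
      have "i' * m2 + j' < t" using Pm d t i' j' j0 by simp
      then have 3: "lookup E (A i' j') = W hk G i' j'" using IH[of j' i'] j0 j' by (simp add: A_def cA_def G_def)
      show ?thesis using aa d i' j' 1 2 3 by (simp add: numeral_2_eq_2)
    qed
  qed
  have W00: "W hk G 0 0 = hf hk (G 1 1) 0" by simp
  have ex: "length (exec D E (cellg (base + 10 * t) za hk i0 j0 a1 a2 a3)) = base + 10 * t + 10 \<and>
         lookup (exec D E (cellg (base + 10 * t) za hk i0 j0 a1 a2 a3)) (base + 10 * t + 9) =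
           hf hk (Gf D (lookup E za) (i0+1) (j0+1)) (min (min (lookup E a1) (lookup E a2)) (lookup E a3))"
    by (rule cellg_exec) (use LE bnd b E0 in auto)
  define E' where "E' = exec D E (cellg (base + 10 * t) za hk i0 j0 a1 a2 a3)"
  have E'eq: "exec D s (phase m2 base za hk (Suc t)) = E'" unfolding E'_def ph cl E_def by simp
  have newv: "lookup E' (base + 10 * t + 9) = W hk G i0 j0"
    using ex val W00 unfolding E'_def G_def Eza by auto
  show ?case
  proof (intro conjI allI impI)
    show "length (exec D s (phase m2 base za hk (Suc t))) = base + 10 * Suc t"
      using E'eq ex E'_def by simp
  next
    fix i j assume j: "j < m2" and ij: "i * m2 + j < Suc t"
    show "lookup (exec D s (phase m2 base za hk (Suc t))) (base + 10 * (i * m2 + j) + 9) =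
          W hk (Gf D (lookup s za)) i j"
    proof (cases "i * m2 + j < t")
      case True
      have "lookup E' (base + 10 * (i * m2 + j) + 9) = lookup E (base + 10 * (i * m2 + j) + 9)"
        unfolding E'_def using True LE by (intro exec_lookup) simp
      then show ?thesis using IH[OF j True] E'eq by (simp add: G_def)
    next
      case False
      then have "i * m2 + j = i0 * m2 + j0" using ij t by simp
      then have "i = i0 \<and> j = j0" using j j0 m2
        by (metis add.commute div_mult_self1 div_less mod_mult_self1 mod_less not_gr0 add_cancel_left_left)
      then show ?thesis using newv E'eq t by (simp add: G_def)
    qed
  qed
qed



fun Xr :: "(nat \<Rightarrow> real) \<Rightarrow> nat \<Rightarrow> real" where
  "Xr F 0 = F 0"
| "Xr F (Suc n) = min (Xr F n) (F (Suc n))"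

definition iter :: "nat \<Rightarrow> nat \<Rightarrow> real \<Rightarrow> real \<Rightarrow> nat \<Rightarrow> instr list" where
  "iter m1 m2 q kk i = (let P = m1 * m2; S = 1 + 10 * P + i * (10 * P + 7) in
     [IC (q ^ i), IO Mul (10 * P) S] @ phase m2 (S + 2) (S + 1) True P @
     [IC kk, IO Mul (S + 1) (S + 2 + 10 * P), IO Add (S + 1 + 10 * P) (S + 3 + 10 * P),
      IMin (if i = 0 then S + 4 + 10 * P else S - 1) (S + 4 + 10 * P)])"

definition prog :: "nat \<Rightarrow> nat \<Rightarrow> real \<Rightarrow> real \<Rightarrow> nat \<Rightarrow> instr list" where
  "prog m1 m2 q kk N = [IC 0] @ phase m2 1 0 False (m1 * m2) @ concat (map (iter m1 m2 q kk) [0..<Suc N])"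

lemma last_cell:
  assumes "1 \<le> m1" "1 \<le> m2"
  shows "(m1 - 1) * m2 + (m2 - 1) < m1 * m2" "(m1 - 1) * m2 + (m2 - 1) + 1 = m1 * m2" "cA m2 base (m1 - 1) (m2 - 1) = base + 10 * (m1 * m2) - 1"
proof -
  have e: "(m1 - 1) * m2 + m2 = m1 * m2" using assms by (metis Suc_diff_1 mult_Suc add.commute less_le_trans zero_less_one)
  show "(m1 - 1) * m2 + (m2 - 1) < m1 * m2" using e assms by linarith
  show f: "(m1 - 1) * m2 + (m2 - 1) + 1 = m1 * m2" using e assms by linarith
  show "cA m2 base (m1 - 1) (m2 - 1) = base + 10 * (m1 * m2) - 1"
    unfolding cA_def f[symmetric] by simp
qed

lemma stage0:
  fixes D :: "nat \<Rightarrow> nat \<Rightarrow> real"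
  assumes m: "1 \<le> m1" "1 \<le> m2"
  defines "E0 \<equiv> exec D [] ([IC 0] @ phase m2 1 0 False (m1 * m2))"
  shows "length E0 = 1 + 10 * (m1 * m2) \<and> lookup E0 0 = 0 \<and>
         lookup E0 (10 * (m1 * m2)) = W False (Gf D 0) (m1 - 1) (m2 - 1)"
proof -
  have s: "exec D [] [IC 0] = [0]" by simp
  have l0: "lookup [0] 0 = 0" by (simp add: lookup_def)
  have pc: "length (exec D [0] (phase m2 1 0 False (m1 * m2))) = 1 + 10 * (m1 * m2) \<and>
    (\<forall>i j. j < m2 \<longrightarrow> i * m2 + j < m1 * m2 \<longrightarrow>
       lookup (exec D [0] (phase m2 1 0 False (m1 * m2))) (1 + 10 * (i * m2 + j) + 9) =
       W False (Gf D (lookup [0] 0)) i j)"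
    by (rule phase_correct) (use m l0 in auto)
  have E: "E0 = exec D [0] (phase m2 1 0 False (m1 * m2))" unfolding E0_def by simp
  have "lookup E0 0 = 0" unfolding E using exec_lookup[of 0 "[0]"] l0 by simp
  moreover have "lookup E0 (10 * (m1 * m2)) = W False (Gf D 0) (m1 - 1) (m2 - 1)"
  proof -
    have a: "1 + 10 * ((m1 - 1) * m2 + (m2 - 1)) + 9 = 10 * (m1 * m2)"
      using last_cell(3)[OF m, of 1] unfolding cA_def by simp
    have "m2 - 1 < m2" using m by simp
    then show ?thesis using pc last_cell(1)[OF m] a unfolding E l0 by metis
  qed
  ultimately show ?thesis using pc E by simp
qed

lemma iters:
  fixes D :: "nat \<Rightarrow> nat \<Rightarrow> real" and q kk :: real
  assumes m: "1 \<le> m1" "1 \<le> m2"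
  defines "E0 \<equiv> exec D [] ([IC 0] @ phase m2 1 0 False (m1 * m2))"
  defines "Mv \<equiv> W False (Gf D 0) (m1 - 1) (m2 - 1)"
  defines "F \<equiv> (\<lambda>i. W True (Gf D (Mv * q ^ i)) (m1 - 1) (m2 - 1) + Mv * q ^ i * kk)"
  shows "length (exec D E0 (concat (map (iter m1 m2 q kk) [0..<n]))) = 1 + 10 * (m1 * m2) + n * (10 * (m1 * m2) + 7) \<and>
    lookup (exec D E0 (concat (map (iter m1 m2 q kk) [0..<n]))) 0 = 0 \<and>
    lookup (exec D E0 (concat (map (iter m1 m2 q kk) [0..<n]))) (10 * (m1 * m2)) = Mv \<and>
    (0 < n \<longrightarrow> lookup (exec D E0 (concat (map (iter m1 m2 q kk) [0..<n])))
        (1 + 10 * (m1 * m2) + n * (10 * (m1 * m2) + 7) - 1) = Xr F (n - 1))"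
proof (induction n)
  case 0
  then show ?case using stage0[OF m, of D] unfolding E0_def Mv_def by simp
next
  case (Suc n)
  define P where "P = m1 * m2"
  have P1: "1 \<le> P" using m by (simp add: P_def)
  define S where "S = 1 + 10 * P + n * (10 * P + 7)"
  define En where "En = exec D E0 (concat (map (iter m1 m2 q kk) [0..<n]))"
  have LEn: "length En = S" and En0: "lookup En 0 = 0" and EnM: "lookup En (10 * P) = Mv"
    and Enp: "0 < n \<Longrightarrow> lookup En (S - 1) = Xr F (n - 1)"
    using Suc.IH unfolding En_def S_def P_def by auto
  have it: "iter m1 m2 q kk n = [IC (q ^ n), IO Mul (10 * P) S] @ phase m2 (S + 2) (S + 1) True P @
     [IC kk, IO Mul (S + 1) (S + 2 + 10 * P), IO Add (S + 1 + 10 * P) (S + 3 + 10 * P),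
      IMin (if n = 0 then S + 4 + 10 * P else S - 1) (S + 4 + 10 * P)]"
    unfolding iter_def Let_def S_def P_def by simp
  define E1 where "E1 = En @ [q ^ n, Mv * q ^ n]"
  have e1: "exec D En [IC (q ^ n), IO Mul (10 * P) S] = E1"
  proof -
    have "10 * P < S" unfolding S_def by simp
    then show ?thesis using LEn EnM by (simp add: E1_def lookup_app2 lookup_Cons)
  qed
  have LE1: "length E1 = S + 2" using LEn by (simp add: E1_def)
  have E10: "lookup E1 0 = 0" using En0 LEn unfolding E1_def S_def by (simp add: lookup_app2)
  have E1z: "lookup E1 (S + 1) = Mv * q ^ n" using LEn unfolding E1_def by (simp add: lookup_app2 lookup_Cons)
  define E2 where "E2 = exec D E1 (phase m2 (S + 2) (S + 1) True P)"
  have pc: "length E2 = S + 2 + 10 * P \<and>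
    (\<forall>i j. j < m2 \<longrightarrow> i * m2 + j < P \<longrightarrow>
       lookup E2 (S + 2 + 10 * (i * m2 + j) + 9) = W True (Gf D (lookup E1 (S + 1))) i j)"
    unfolding E2_def by (rule phase_correct) (use LE1 E10 m in auto)
  have LE2: "length E2 = S + 2 + 10 * P" using pc by simp
  have R: "lookup E2 (S + 1 + 10 * P) = W True (Gf D (Mv * q ^ n)) (m1 - 1) (m2 - 1)"
  proof -
    have a: "S + 2 + 10 * ((m1 - 1) * m2 + (m2 - 1)) + 9 = S + 1 + 10 * P"
      unfolding P_def last_cell(2)[OF m, symmetric] by simp
    have "m2 - 1 < m2" using m by simp
    then show ?thesis using pc last_cell(1)[OF m] a E1z unfolding P_def by metis
  qed
  have E2z: "lookup E2 (S + 1) = Mv * q ^ n"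
    using exec_lookup[of "S + 1" E1] LE1 E1z unfolding E2_def by simp
  have E2p: "0 < n \<Longrightarrow> lookup E2 (S - 1) = Xr F (n - 1)"
  proof -
    assume n: "0 < n"
    have "lookup E2 (S - 1) = lookup E1 (S - 1)"
      using exec_lookup[of "S - 1" E1] LE1 unfolding E2_def by simp
    also have "\<dots> = lookup En (S - 1)" using LEn unfolding E1_def S_def by (simp add: lookup_app2)
    finally show ?thesis using Enp[OF n] by simp
  qed
  have E20: "lookup E2 0 = 0" using exec_lookup[of 0 E1] LE1 E10 unfolding E2_def by simp
  have E2M: "lookup E2 (10 * P) = Mv"
  proof -
    have "10 * P < S" unfolding S_def by simp
    then show ?thesis using exec_lookup[of "10 * P" E1] LE1 LEn EnM unfolding E2_def E1_def
      by (simp add: lookup_app2)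
  qed
  define Fn where "Fn = W True (Gf D (Mv * q ^ n)) (m1 - 1) (m2 - 1) + Mv * q ^ n * kk"
  define pr where "pr = (if n = 0 then S + 4 + 10 * P else S - 1)"
  define prv where "prv = (if n = 0 then Fn else Xr F (n - 1))"
  define E3 where "E3 = E2 @ [kk, Mv * q ^ n * kk, Fn]"
  have e3: "exec D E2 [IC kk, IO Mul (S + 1) (S + 2 + 10 * P), IO Add (S + 1 + 10 * P) (S + 3 + 10 * P)] = E3"
    using LE2 E2z R by (simp add: E3_def Fn_def lookup_app2 lookup_Cons)
  have LE3: "length E3 = S + 5 + 10 * P" using LE2 by (simp add: E3_def)
  have E3F: "lookup E3 (S + 4 + 10 * P) = Fn" using LE2 by (simp add: E3_def lookup_app2 lookup_Cons)
  have E3p: "lookup E3 pr = prv"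
  proof (cases "n = 0")
    case True then show ?thesis using E3F by (simp add: pr_def prv_def)
  next
    case False
    have "S - 1 < length E2" using LE2 unfolding S_def by simp
    then show ?thesis using False E2p by (simp add: pr_def prv_def E3_def lookup_app2)
  qed
  have prl: "pr < length E3" using LE3 unfolding pr_def S_def by auto
  define E4 where "E4 = E3 @ [prv + Fn, min prv Fn]"
  have e4: "exec D E3 [IMin pr (S + 4 + 10 * P)] = E4"
    using prl LE3 E3p E3F by (simp del: ivals.simps(4,5) add: ivals_min E4_def)
  have it2: "iter m1 m2 q kk n = [IC (q ^ n), IO Mul (10 * P) S] @ (phase m2 (S + 2) (S + 1) True P @
     ([IC kk, IO Mul (S + 1) (S + 2 + 10 * P), IO Add (S + 1 + 10 * P) (S + 3 + 10 * P)] @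
      [IMin pr (S + 4 + 10 * P)]))"
    unfolding it pr_def by simp
  have "exec D E0 (concat (map (iter m1 m2 q kk) [0..<Suc n])) = exec D En (iter m1 m2 q kk n)"
    by (simp add: En_def)
  also have "\<dots> = exec D (exec D (exec D (exec D En [IC (q ^ n), IO Mul (10 * P) S])
      (phase m2 (S + 2) (S + 1) True P))
      [IC kk, IO Mul (S + 1) (S + 2 + 10 * P), IO Add (S + 1 + 10 * P) (S + 3 + 10 * P)])
      [IMin pr (S + 4 + 10 * P)]"
    by (simp only: it2 exec_append)
  also have "\<dots> = E4" by (simp only: e1 E2_def[symmetric] e3 e4)
  finally have all: "exec D E0 (concat (map (iter m1 m2 q kk) [0..<Suc n])) = E4" .
  have LE4: "length E4 = 1 + 10 * P + Suc n * (10 * P + 7)" using LE3 by (simp add: E4_def S_def)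
  have val: "lookup E4 (1 + 10 * P + Suc n * (10 * P + 7) - 1) = Xr F n"
  proof -
    have "lookup E4 (1 + 10 * P + Suc n * (10 * P + 7) - 1) = min prv Fn"
      using LE3 by (simp add: E4_def lookup_app2 lookup_Cons S_def)
    also have "\<dots> = Xr F n"
    proof (cases n)
      case 0 then show ?thesis by (simp add: prv_def F_def Fn_def)
    next
      case (Suc n') then show ?thesis by (simp add: prv_def F_def Fn_def)
    qed
    finally show ?thesis .
  qed
  have l0: "lookup E4 0 = 0"
    using E20 LE2 unfolding E4_def E3_def by (simp add: lookup_app2)
  have lM: "lookup E4 (10 * P) = Mv"
  proof -
    have "10 * P < length E2" using LE2 by simp
    then show ?thesis using E2M unfolding E4_def E3_def by (simp add: lookup_app2)
  qed
  show ?case using all LE4 val l0 lM unfolding P_def by simp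
qed



lemma Xr_le: "i \<le> n \<Longrightarrow> Xr F n \<le> F i"
proof (induction n)
  case (Suc n) then show ?case by (cases "i = Suc n") (auto simp: le_Suc_eq min.coboundedI1)
qed simp

lemma Xr_ex: "\<exists>i\<le>n. Xr F n = F i"
proof (induction n)
  case (Suc n)
  then obtain i where "i \<le> n" "Xr F n = F i" by auto
  then show ?case by (cases "Xr F n \<le> F (Suc n)") (auto simp: min_def intro: exI[of _ "Suc n"] le_SucI)
qed simp

definition dd :: "real list list \<Rightarrow> real list list \<Rightarrow> nat \<times> nat \<Rightarrow> real" where
  "dd \<sigma> \<tau> = (\<lambda>(i,j). eucl_dist (\<sigma> ! (i - 1)) (\<tau> ! (j - 1)))"

lemma dd_nonneg: "0 \<le> dd \<sigma> \<tau> p" by (cases p) (simp add: dd_def eucl_dist_def sum_nonneg)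

lemma trav_cost_dd: "trav_cost k \<sigma> \<tau> T = topk_sum k (map (dd \<sigma> \<tau>) T)"
  by (simp add: trav_cost_def dd_def)

lemma oracle_dd: "1 \<le> fst p \<Longrightarrow> fst p \<le> length \<sigma> \<Longrightarrow> 1 \<le> snd p \<Longrightarrow> snd p \<le> length \<tau> \<Longrightarrow>
  curve_oracle \<sigma> \<tau> (fst p) (snd p) = dd \<sigma> \<tau> p"
  by (cases p) (simp add: curve_oracle_def dd_def)

lemma approx:
  fixes \<sigma> \<tau> :: "real list list" and \<epsilon> q :: real
  assumes m: "1 \<le> length \<sigma>" "1 \<le> length \<tau>" and k: "1 \<le> k" and e: "0 < \<epsilon>"
    and q: "q = 1 / (1 + \<epsilon>)" and N: "real k / \<epsilon> \<le> (1 + \<epsilon>) ^ N"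
  defines "D \<equiv> curve_oracle \<sigma> \<tau>"
  defines "Mv \<equiv> W False (Gf D 0) (length \<sigma> - 1) (length \<tau> - 1)"
  defines "F \<equiv> (\<lambda>i. W True (Gf D (Mv * q ^ i)) (length \<sigma> - 1) (length \<tau> - 1) + Mv * q ^ i * real k)"
  shows "kdtw k \<sigma> \<tau> \<le> Xr F N \<and> Xr F N \<le> (1 + \<epsilon>) * kdtw k \<sigma> \<tau>"
proof -
  define m1 where "m1 = length \<sigma>"
  define m2 where "m2 = length \<tau>"
  have s1: "Suc (m1 - 1) = m1" "Suc (m2 - 1) = m2" using m unfolding m1_def m2_def by arith+
  have lastT: "(m1, m2) = (Suc (m1 - 1), Suc (m2 - 1))" using s1 by simp
  define d where "d = dd \<sigma> \<tau>"
  define cost where "cost T = trav_cost k \<sigma> \<tau> T" for T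
  define S where "S z T = sum_list (map (\<lambda>x. max (x - z) 0) (map d T))" for z T
  define TR where "TR = {T. is_traversal m1 m2 T}"
  have kpos: "0 < real k" using k by simp
  have rng: "\<And>T p. T \<in> TR \<Longrightarrow> p \<in> set T \<Longrightarrow> 1 \<le> fst p \<and> fst p \<le> m1 \<and> 1 \<le> snd p \<and> snd p \<le> m2"
    unfolding TR_def is_traversal_vp using vp_range by blast
  have Gd: "\<And>T p z. T \<in> TR \<Longrightarrow> p \<in> set T \<Longrightarrow> Gf D z (fst p) (snd p) = max (d p - z) 0"
    unfolding Gf_def D_def d_def using rng oracle_dd m1_def m2_def by metis
  have costd: "cost T = topk_sum k (map d T)" for T unfolding cost_def d_def by (rule trav_cost_dd)
  have nn: "\<forall>x\<in>set (map d T). 0 \<le> x" for T by (auto simp: d_def dd_nonneg)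
  have cost_nn: "0 \<le> cost T" for T unfolding costd by (rule topk_nonneg[OF nn])
  have pvS: "pv True (Gf D z) T = S z T" if "T \<in> TR" for T z
    unfolding pv_sum S_def map_map o_def using Gd[OF that] by (intro arg_cong[where f=sum_list] map_cong) auto
  have WL: "W hk G (m1 - 1) (m2 - 1) \<le> pv hk G T" if "T \<in> TR" for hk G T
    using that W_lower[of T "m1 - 1" "m2 - 1" hk G] lastT unfolding TR_def is_traversal_vp by auto
  have WU: "\<exists>T\<in>TR. pv hk G T = W hk G (m1 - 1) (m2 - 1)" for hk G
    using W_upper[of "m1 - 1" "m2 - 1" hk G] lastT unfolding TR_def is_traversal_vp by auto
  have Mdef: "Mv = W False (Gf D 0) (m1 - 1) (m2 - 1)" unfolding Mv_def m1_def m2_def ..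
  have Fdef: "F i = W True (Gf D (Mv * q ^ i)) (m1 - 1) (m2 - 1) + Mv * q ^ i * real k" for i
    unfolding F_def m1_def m2_def ..
  obtain TM where TM: "TM \<in> TR" "pv False (Gf D 0) TM = Mv" using WU[of False "Gf D 0"] Mdef by auto
  have M0: "0 \<le> Mv" using TM pv_max_nonneg by metis
  have TMle: "d p \<le> Mv" if "p \<in> set TM" for p
    using pv_max_ge[OF that, of "Gf D 0"] TM Gd[OF TM(1) that, of 0] that by (simp add: dd_nonneg d_def)
  have Mle: "Mv \<le> cost T" if "T \<in> TR" for T
  proof -
    have "Mv \<le> pv False (Gf D 0) T" using WL[OF that] Mdef by simp
    also have "\<dots> \<le> cost T"
    proof (rule pv_max_le[OF cost_nn], intro ballI)
      fix p assume p: "p \<in> set T"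
      have "d p \<le> cost T" unfolding costd using p nn k by (intro topk_ge_elem) auto
      then show "Gf D 0 (fst p) (snd p) \<le> cost T" using Gd[OF that p, of 0] by (simp add: d_def dd_nonneg)
    qed
    finally show ?thesis .
  qed
  define zi where "zi i = Mv * q ^ i" for i
  have q0: "0 < q" using q e by simp
  have zi0: "0 \<le> zi i" for i using M0 q0 by (simp add: zi_def)
  have Fup: "F i \<le> S (zi i) T + zi i * real k" if "T \<in> TR" for i T
    using WL[OF that, of True "Gf D (zi i)"] pvS[OF that] by (simp add: Fdef zi_def)
  have Santi: "S z' T \<le> S z T" if "z \<le> z'" for z z' T
    unfolding S_def using that by (intro sum_list_mono) auto
  have Sup: "topk_sum k (map d T) \<le> real k * z + S z T" if "0 \<le> z" for z T
    unfolding S_def by (rule topk_upper[OF that])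
  have bdd: "bdd_below (cost ` TR)" using cost_nn by (intro bdd_belowI[of _ 0]) auto
  have ne: "cost ` TR \<noteq> {}" using TM by auto
  have kd: "kdtw k \<sigma> \<tau> = Inf (cost ` TR)"
    unfolding kdtw_def cost_def TR_def m1_def m2_def by (simp add: image_def) metis
  have lowF: "kdtw k \<sigma> \<tau> \<le> F i" for i
  proof -
    obtain T where T: "T \<in> TR" "pv True (Gf D (zi i)) T = W True (Gf D (zi i)) (m1 - 1) (m2 - 1)"
      using WU by blast
    have "kdtw k \<sigma> \<tau> \<le> cost T" unfolding kd using bdd T(1) by (intro cInf_lower) auto
    also have "\<dots> \<le> real k * zi i + S (zi i) T" unfolding costd by (rule Sup[OF zi0])
    also have "\<dots> = F i" using T pvS[OF T(1)] by (simp add: Fdef zi_def)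
    finally show ?thesis .
  qed
  have low: "kdtw k \<sigma> \<tau> \<le> Xr F N" using Xr_ex[of N F] lowF by metis
  have upT: "Xr F N \<le> (1 + \<epsilon>) * cost T" if T: "T \<in> TR" for T
  proof -
    define c where "c = cost T"
    obtain z0 where z0: "0 \<le> z0" "real k * z0 \<le> c" "real k * z0 + S z0 T \<le> c"
      using topk_lower[OF nn k, of T] unfolding c_def costd S_def by blast
    have c0: "0 \<le> c" using cost_nn c_def by simp
    have Mc: "Mv \<le> c" using Mle[OF T] c_def by simp
    show ?thesis
    proof (cases "Mv < z0")
      case True
      have S0: "S Mv TM = 0"
      proof -
        have e: "map (\<lambda>x. max (d x - Mv) 0) TM = map (\<lambda>x. 0::real) TM" using TMle by (intro map_cong) auto
        have "S Mv TM = sum_list (map (\<lambda>x. 0::real) TM)" unfolding S_def map_map o_def e ..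
        also have "\<dots> = 0" by (rule sum_list_0)
        finally show ?thesis .
      qed
      have "Xr F N \<le> F 0" by (rule Xr_le) simp
      also have "\<dots> \<le> S (zi 0) TM + zi 0 * real k" by (rule Fup[OF TM(1)])
      also have "\<dots> = Mv * real k" using S0 by (simp add: zi_def)
      also have "\<dots> \<le> z0 * real k" using True kpos by simp
      also have "\<dots> \<le> (1 + \<epsilon>) * c"
      proof -
        have "z0 * real k \<le> c" using z0(2) by (simp add: mult.commute)
        moreover have "c \<le> (1 + \<epsilon>) * c" using c0 e by (simp add: algebra_simps)
        ultimately show ?thesis by linarith
      qed
      finally show ?thesis unfolding c_def .
    next
      case False
      have step: "F n \<le> (1 + \<epsilon>) * c" if "zi (Suc n) < z0" "z0 \<le> zi n" for n
      proof -
        have h: "(1 + \<epsilon>) * q = 1" unfolding q using e by simp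
        have "(1 + \<epsilon>) * zi (Suc n) = Mv * q ^ n * ((1 + \<epsilon>) * q)" unfolding zi_def by (simp add: algebra_simps)
        then have zs: "zi n = (1 + \<epsilon>) * zi (Suc n)" using h by (simp add: zi_def)
        have "F n \<le> S (zi n) T + zi n * real k" by (rule Fup[OF T])
        also have "\<dots> \<le> S z0 T + zi n * real k" using Santi[OF that(2)] by simp
        finally have 1: "F n \<le> S z0 T + zi n * real k" .
        have 2: "real k * zi (Suc n) < real k * z0" using that(1) kpos by simp
        have 3: "(1 + \<epsilon>) * (real k * zi (Suc n)) \<le> (1 + \<epsilon>) * (real k * z0)"
          using 2 e that(1) by (intro mult_left_mono) auto
        have 4: "\<epsilon> * (real k * z0) \<le> \<epsilon> * c" using z0 e by (intro mult_left_mono) auto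
        have "zi n * real k = (1 + \<epsilon>) * (real k * zi (Suc n))" using zs by simp
        then show ?thesis using 1 3 4 z0 by (simp add: algebra_simps)
      qed
      have claim: "(\<exists>i\<le>n. F i \<le> (1 + \<epsilon>) * c) \<or> z0 \<le> zi n" for n
      proof (induction n)
        case 0 then show ?case using False by (simp add: zi_def)
      next
        case (Suc n)
        show ?case
        proof (cases "z0 \<le> zi (Suc n)")
          case False
          from Suc show ?thesis
          proof
            assume "\<exists>i\<le>n. F i \<le> (1 + \<epsilon>) * c" then show ?thesis by (auto intro: le_SucI)
          next
            assume "z0 \<le> zi n"
            then have "F n \<le> (1 + \<epsilon>) * c" using step False by simp
            then show ?thesis by (auto intro: exI[of _ n])
          qed
        qed simp
      qed
      show ?thesis
      proof (cases "\<exists>i\<le>N. F i \<le> (1 + \<epsilon>) * c")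
        case True
        then obtain i where "i \<le> N" "F i \<le> (1 + \<epsilon>) * c" by auto
        then show ?thesis using Xr_le[of i N F] unfolding c_def by linarith
      next
        case nf: False
        then have zN: "z0 \<le> zi N" using claim[of N] by blast
        have "F N \<le> S (zi N) T + zi N * real k" by (rule Fup[OF T])
        also have "\<dots> \<le> S z0 T + zi N * real k" using Santi[OF zN] by simp
        finally have 1: "F N \<le> S z0 T + zi N * real k" .
        have qN: "q ^ N * real k \<le> \<epsilon>"
        proof -
          have p: "0 < (1 + \<epsilon>) ^ N" using e by simp
          have "q ^ N = 1 / (1 + \<epsilon>) ^ N" unfolding q by (simp add: power_divide)
          then have "q ^ N * real k = real k / (1 + \<epsilon>) ^ N" by simp
          also have "\<dots> \<le> \<epsilon>" using N p e by (simp add: divide_le_eq field_simps)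
          finally show ?thesis .
        qed
        have "zi N * real k \<le> Mv * \<epsilon>" unfolding zi_def using mult_left_mono[OF qN M0] by (simp add: mult.assoc)
        also have "\<dots> \<le> c * \<epsilon>" using Mc e by (intro mult_right_mono) auto
        finally have 2: "zi N * real k \<le> c * \<epsilon>" .
        have "Xr F N \<le> F N" by (rule Xr_le) simp
        moreover have "0 \<le> real k * z0" using z0(1) by simp
        moreover have "(1 + \<epsilon>) * c = c + c * \<epsilon>" by (simp add: algebra_simps)
        ultimately show ?thesis using 1 2 z0(3) unfolding c_def by linarith
      qed
    qed
  qed
  have "Xr F N / (1 + \<epsilon>) \<le> kdtw k \<sigma> \<tau>"
    unfolding kd
  proof (rule cInf_greatest[OF ne])
    fix x assume "x \<in> cost ` TR"
    then obtain T where "T \<in> TR" "x = cost T" by auto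
    then show "Xr F N / (1 + \<epsilon>) \<le> x" using upT e by (simp add: divide_le_eq mult.commute)
  qed
  then have "Xr F N \<le> (1 + \<epsilon>) * kdtw k \<sigma> \<tau>" using e by (simp add: divide_le_eq mult.commute)
  then show ?thesis using low by simp
qed



lemma grid:
  fixes \<epsilon> :: real and k :: nat
  assumes e: "0 < \<epsilon>" "\<epsilon> \<le> 1" and k: "1 \<le> k"
  defines "B \<equiv> nat \<lceil>1 / \<epsilon>\<rceil>" and "Lg \<equiv> nat \<lceil>log 2 (real k / \<epsilon>)\<rceil>"
  shows "real k / \<epsilon> \<le> (1 + \<epsilon>) ^ (B * Lg)"
    and "real (B * Lg + 1) \<le> 5 * max 1 (log 2 (real k / \<epsilon>)) / \<epsilon>"
proof -
  have ke: "1 \<le> real k / \<epsilon>" using e k by (simp add: le_divide_eq)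
  have lg0: "0 \<le> log 2 (real k / \<epsilon>)" using ke by simp
  have Bge: "1 / \<epsilon> \<le> real B" unfolding B_def by linarith
  have ie0: "0 \<le> 1 / \<epsilon>" using e by simp
  have Ble: "real B \<le> 1 / \<epsilon> + 1" unfolding B_def using ie0 by linarith
  have Lge: "log 2 (real k / \<epsilon>) \<le> real Lg" unfolding Lg_def by linarith
  have Lle: "real Lg \<le> log 2 (real k / \<epsilon>) + 1" unfolding Lg_def using lg0 by linarith
  have "2 \<le> 1 + real B * \<epsilon>" using Bge e by (simp add: divide_le_eq)
  also have "\<dots> \<le> (1 + \<epsilon>) ^ B" using Bernoulli_inequality[of \<epsilon> B] e by simp
  finally have b2: "2 \<le> (1 + \<epsilon>) ^ B" .
  have "real k / \<epsilon> = 2 powr (log 2 (real k / \<epsilon>))" using ke by simp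
  also have "\<dots> \<le> 2 powr (real Lg)" using Lge by (intro powr_mono) auto
  also have "\<dots> = 2 ^ Lg" by (simp add: powr_realpow)
  also have "\<dots> \<le> ((1 + \<epsilon>) ^ B) ^ Lg" using b2 by (intro power_mono) auto
  also have "\<dots> = (1 + \<epsilon>) ^ (B * Lg)" by (simp add: power_mult)
  finally show "real k / \<epsilon> \<le> (1 + \<epsilon>) ^ (B * Lg)" .
  define \<Lambda> where "\<Lambda> = max 1 (log 2 (real k / \<epsilon>))"
  have L1: "1 \<le> \<Lambda>" unfolding \<Lambda>_def by simp
  have iep: "1 \<le> 1 / \<epsilon>" using e by simp
  have B2: "real B \<le> 2 / \<epsilon>" using Ble iep by simp
  have L2: "real Lg \<le> 2 * \<Lambda>" using Lle L1 unfolding \<Lambda>_def by linarith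
  have "real B * real Lg \<le> (2 / \<epsilon>) * (2 * \<Lambda>)" using B2 L2 e by (intro mult_mono) auto
  moreover have "1 \<le> \<Lambda> / \<epsilon>" using L1 iep e by (simp add: le_divide_eq)
  moreover have "(2 / \<epsilon>) * (2 * \<Lambda>) = 4 * (\<Lambda> / \<epsilon>)" by simp
  ultimately have "real B * real Lg + 1 \<le> 5 * (\<Lambda> / \<epsilon>)" by linarith
  then show "real (B * Lg + 1) \<le> 5 * max 1 (log 2 (real k / \<epsilon>)) / \<epsilon>" unfolding \<Lambda>_def by simp
qed

lemma count_bound:
  fixes P N :: nat assumes "1 \<le> P"
  shows "1 + 3 * (1 + 10 * P + (N + 1) * (10 * P + 7)) \<le> 85 * P * (N + 1)"
proof -
  have a: "4 + 30 * P \<le> 34 * P * (N + 1)" using assms by (simp add: algebra_simps) 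
  have b1: "(N + 1) * 1 \<le> (N + 1) * P" using assms by (intro mult_le_mono2)
  have eq1: "3 * ((N + 1) * (10 * P + 7)) = 30 * ((N + 1) * P) + 21 * ((N + 1) * 1)" by (simp add: algebra_simps)
  have eq2: "51 * P * (N + 1) = 51 * ((N + 1) * P)" by (simp add: algebra_simps)
  have b: "3 * ((N + 1) * (10 * P + 7)) \<le> 51 * P * (N + 1)" unfolding eq1 eq2 using b1 by linarith
  show ?thesis using a b by (simp add: algebra_simps)
qed



theorem theorem3p4:
  "\<exists>C::real. C > 0 \<and>
     (\<forall>(m1::nat) (m2::nat) (k::nat) (\<epsilon>::real).
        1 \<le> m1 \<longrightarrow> 1 \<le> m2 \<longrightarrow> 1 \<le> k \<longrightarrow> 0 < \<epsilon> \<longrightarrow> \<epsilon> \<le> 1 \<longrightarrow>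
        (\<exists>A::ctree. \<forall>(d::nat) (\<sigma>::real list list) (\<tau>::real list list).
           length \<sigma> = m1 \<longrightarrow> length \<tau> = m2 \<longrightarrow>
           (\<forall>v\<in>set \<sigma>. length v = d) \<longrightarrow> (\<forall>w\<in>set \<tau>. length w = d) \<longrightarrow>
           (let (X, c) = run (curve_oracle \<sigma> \<tau>) [] A in
              kdtw k \<sigma> \<tau> \<le> X \<and> X \<le> (1 + \<epsilon>) * kdtw k \<sigma> \<tau> \<and>
              real c \<le> C * real m1 * real m2 * max 1 (log 2 (real k / \<epsilon>)) / \<epsilon>)))"
proof (intro exI[of _ 500] conjI allI impI)
  fix m1 m2 k :: nat and \<epsilon> :: real
  assume m1: "1 \<le> m1" and m2: "1 \<le> m2" and k: "1 \<le> k" and e0: "0 < \<epsilon>" and e1: "\<epsilon> \<le> 1"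
  define q where "q = 1 / (1 + \<epsilon>)"
  define B where "B = nat \<lceil>1 / \<epsilon>\<rceil>"
  define Lg where "Lg = nat \<lceil>log 2 (real k / \<epsilon>)\<rceil>"
  define N where "N = B * Lg"
  define P where "P = m1 * m2"
  define pr where "pr = prog m1 m2 q (real k) N"
  define r where "r = 10 * P + (N + 1) * (10 * P + 7)"
  have gr1: "real k / \<epsilon> \<le> (1 + \<epsilon>) ^ N" unfolding N_def B_def Lg_def by (rule grid(1)[OF e0 e1 k])
  have gr2: "real (N + 1) \<le> 5 * max 1 (log 2 (real k / \<epsilon>)) / \<epsilon>"
    unfolding N_def B_def Lg_def by (rule grid(2)[OF e0 e1 k])
  show "\<exists>A. \<forall>d \<sigma> \<tau>. length \<sigma> = m1 \<longrightarrow> length \<tau> = m2 \<longrightarrow>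
           (\<forall>v\<in>set \<sigma>. length v = d) \<longrightarrow> (\<forall>w\<in>set \<tau>. length w = d) \<longrightarrow>
           (let (X, c) = run (curve_oracle \<sigma> \<tau>) [] A in
              kdtw k \<sigma> \<tau> \<le> X \<and> X \<le> (1 + \<epsilon>) * kdtw k \<sigma> \<tau> \<and>
              real c \<le> 500 * real m1 * real m2 * max 1 (log 2 (real k / \<epsilon>)) / \<epsilon>)"
  proof (intro exI[of _ "cprog 0 pr r"] allI impI)
    fix d :: nat and \<sigma> \<tau> :: "real list list"
    assume l1: "length \<sigma> = m1" and l2: "length \<tau> = m2"
    define D where "D = curve_oracle \<sigma> \<tau>"
    define E0 where "E0 = exec D [] ([IC 0] @ phase m2 1 0 False (m1 * m2))"
    define Mv where "Mv = W False (Gf D 0) (m1 - 1) (m2 - 1)"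
    define F where "F = (\<lambda>i. W True (Gf D (Mv * q ^ i)) (m1 - 1) (m2 - 1) + Mv * q ^ i * real k)"
    have rc: "run D [] (cprog 0 pr r) = (lookup (exec D [] pr) r, Suc (sum_list (map icost pr)))"
      by (rule run_comp) simp
    have ex: "exec D [] pr = exec D E0 (concat (map (iter m1 m2 q (real k)) [0..<Suc N]))"
      unfolding pr_def prog_def E0_def by (simp only: exec_append append_assoc[symmetric])
    have it: "length (exec D E0 (concat (map (iter m1 m2 q (real k)) [0..<Suc N]))) = 1 + 10 * P + Suc N * (10 * P + 7) \<and>
      lookup (exec D E0 (concat (map (iter m1 m2 q (real k)) [0..<Suc N])))
        (1 + 10 * P + Suc N * (10 * P + 7) - 1) = Xr F (Suc N - 1)"
      using iters[OF m1 m2, of D q "real k" "Suc N"] unfolding E0_def[symmetric] Mv_def[symmetric] F_def[symmetric] P_def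
      by simp
    have a: "r = 1 + 10 * P + Suc N * (10 * P + 7) - 1" by (simp add: r_def)
    have "lookup (exec D [] pr) r = Xr F (Suc N - 1)" by (simp only: ex a it)
    then have X: "lookup (exec D [] pr) r = Xr F N" by simp
    have L: "sum_list (map ient pr) = 1 + 10 * P + (N + 1) * (10 * P + 7)"
      using exec_length[of D "[]" pr] it ex by simp
    have ap: "kdtw k \<sigma> \<tau> \<le> Xr F N \<and> Xr F N \<le> (1 + \<epsilon>) * kdtw k \<sigma> \<tau>"
      using approx[of \<sigma> \<tau> k \<epsilon> q N] l1 l2 m1 m2 k e0 gr1 q_def
      unfolding F_def Mv_def D_def by simp
    have P1: "1 \<le> P" using m1 m2 by (simp add: P_def)
    have "Suc (sum_list (map icost pr)) \<le> 1 + 3 * (1 + 10 * P + (N + 1) * (10 * P + 7))"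
      using icost_le[of pr] L by simp
    also have "\<dots> \<le> 85 * P * (N + 1)" by (rule count_bound[OF P1])
    finally have cn: "Suc (sum_list (map icost pr)) \<le> 85 * P * (N + 1)" .
    have "real (Suc (sum_list (map icost pr))) \<le> 85 * real P * real (N + 1)"
      using cn by (metis of_nat_le_iff of_nat_mult of_nat_numeral)
    also have "\<dots> \<le> 85 * real P * (5 * max 1 (log 2 (real k / \<epsilon>)) / \<epsilon>)"
      using gr2 by (intro mult_left_mono) auto
    also have "\<dots> \<le> 500 * real m1 * real m2 * max 1 (log 2 (real k / \<epsilon>)) / \<epsilon>"
    proof -
      define Z where "Z = real P * (max 1 (log 2 (real k / \<epsilon>)) / \<epsilon>)"
      have "0 \<le> Z" using e0 by (simp add: Z_def)
      moreover have "85 * real P * (5 * max 1 (log 2 (real k / \<epsilon>)) / \<epsilon>) = 425 * Z"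
        by (simp add: Z_def)
      moreover have "500 * real m1 * real m2 * max 1 (log 2 (real k / \<epsilon>)) / \<epsilon> = 500 * Z"
        by (simp add: Z_def P_def)
      ultimately show ?thesis by linarith
    qed
    finally have cb: "real (Suc (sum_list (map icost pr))) \<le> 500 * real m1 * real m2 * max 1 (log 2 (real k / \<epsilon>)) / \<epsilon>" .
    show "let (X, c) = run (curve_oracle \<sigma> \<tau>) [] (cprog 0 pr r) in
              kdtw k \<sigma> \<tau> \<le> X \<and> X \<le> (1 + \<epsilon>) * kdtw k \<sigma> \<tau> \<and>
              real c \<le> 500 * real m1 * real m2 * max 1 (log 2 (real k / \<epsilon>)) / \<epsilon>"
      using rc X ap cb unfolding D_def by simp
  qed
qed simp


end
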